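(* Let $(\mathfrak{g},\langle\cdot,\cdot\rangle)$ be a quadratic Lie algebra and let $(\mathfrak{h},\theta_1,\dots,\theta_k)$ be a $k$-symplectic structure on $\mathfrak{g}$. If $\mathfrak{h}$ is nondegenerate with respect to $\langle\cdot,\cdot\rangle$ (i.e. the restriction of $\langle\cdot,\cdot\rangle$ to $\mathfrak{h}$ is nondegenerate), then the cohomology classes $[\theta_1],\dots,[\theta_k]$ are linearly independent in $H^2(\mathfrak{g})$. In particular, if $k>\dim H^2(\mathfrak{g})$ then $\mathfrak{h}$ is degenerate with respect to $\langle\cdot,\cdot\rangle$.
   Context: A quadratic Lie algebra is a finite-dimensional real Lie algebra $\mathfrak{g}$ endowed with a nondegenerate symmetric bilinear form $\langle\cdot,\cdot\rangle$ which is invariant: $\langle [u,v],w\rangle+\langle [u,w],v\rangle=0$ for all $u,v,w\in\mathfrak{g}$. $H^2(\mathfrak{g})$ denotes the second Chevalley–Eilenberg cohomology group of $\mathfrak{g}$ with trivial real coefficients, and $[\theta]$ the class of a 2-cocycle $\theta$. A $k$-symplectic structure on a real Lie algebra $\mathfrak{g}$ of dimension $n(k+1)$ ($n,k\ge1$) is a pair consisting of a Lie subalgebra $\mathfrak{h}\subset\mathfrak{g}$ of dimension $nk$ and a family $(\theta_1,\dots,\theta_k)$ of skew-symmetric bilinear forms on $\mathfrak{g}$ such that: (i) $\bigcap_{i=1}^k\ker\theta_i=\{0\}$, where $\ker\theta_i=\{u\in\mathfrak{g}:\theta_i(u,v)=0\ \forall v\in\mathfrak{g}\}$; (ii) each $\theta_i$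 is a 2-cocycle: $\theta_i([u,v],w)+\theta_i([v,w],u)+\theta_i([w,u],v)=0$ for all $u,v,w$; (iii) $\theta_i(u,v)=0$ for all $u,v\in\mathfrak{h}$ and all $i$. *)

theory Defs
  imports "HOL-Analysis.Analysis" "HOL-Library.Function_Algebras"
begin

text \<open>A finite-dimensional real Lie algebra is modelled by a bilinear bracket on a
  type of class euclidean_space (any finite-dimensional real vector space).\<close>

definition lie_algebra :: "('a::euclidean_space \<Rightarrow> 'a \<Rightarrow> 'a) \<Rightarrow> bool" where
  "lie_algebra br \<longleftrightarrow> bilinear br \<and> (\<forall>x. br x x = 0) \<and>
     (\<forall>x y z. br x (br y z) + br y (br z x) + br z (br x y) = 0)"

definition quadratic_form :: "('a::euclidean_space \<Rightarrow> 'a \<Rightarrow> 'a) \<Rightarrow> ('a \<Rightarrow> 'a \<Rightarrow> real) \<Rightarrow> bool" where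
  "quadratic_form br B \<longleftrightarrow> bilinear B \<and> (\<forall>u v. B u v = B v u) \<and>
     (\<forall>u. (\<forall>v. B u v = 0) \<longrightarrow> u = 0) \<and>
     (\<forall>u v w. B (br u v) w + B (br u w) v = 0)"

definition quadratic_lie_algebra :: "('a::euclidean_space \<Rightarrow> 'a \<Rightarrow> 'a) \<Rightarrow> ('a \<Rightarrow> 'a \<Rightarrow> real) \<Rightarrow> bool" where
  "quadratic_lie_algebra br B \<longleftrightarrow> lie_algebra br \<and> quadratic_form br B"

definition lie_subalgebra :: "('a::euclidean_space \<Rightarrow> 'a \<Rightarrow> 'a) \<Rightarrow> 'a set \<Rightarrow> bool" where
  "lie_subalgebra br h \<longleftrightarrow> subspace h \<and> (\<forall>u\<in>h. \<forall>v\<in>h. br u v \<in> h)"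

definition skew_form :: "('a::euclidean_space \<Rightarrow> 'a \<Rightarrow> real) \<Rightarrow> bool" where
  "skew_form \<omega> \<longleftrightarrow> bilinear \<omega> \<and> (\<forall>u v. \<omega> u v = - \<omega> v u)"

definition cocycle2 :: "('a::euclidean_space \<Rightarrow> 'a \<Rightarrow> 'a) \<Rightarrow> ('a \<Rightarrow> 'a \<Rightarrow> real) \<Rightarrow> bool" where
  "cocycle2 br \<omega> \<longleftrightarrow> skew_form \<omega> \<and>
     (\<forall>u v w. \<omega> (br u v) w + \<omega> (br v w) u + \<omega> (br w u) v = 0)"

text \<open>Space of 2-cocycles Z2 and of 2-coboundaries B2; a 2-coboundary is
  the differential of a 1-cochain alpha, i.e. (u,v) maps to -alpha([u,v]) (the sign is
  immaterial for the set).\<close>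

definition Z2 :: "('a::euclidean_space \<Rightarrow> 'a \<Rightarrow> 'a) \<Rightarrow> ('a \<Rightarrow> 'a \<Rightarrow> real) set" where
  "Z2 br = {\<omega>. cocycle2 br \<omega>}"

definition B2 :: "('a::euclidean_space \<Rightarrow> 'a \<Rightarrow> 'a) \<Rightarrow> ('a \<Rightarrow> 'a \<Rightarrow> real) set" where
  "B2 br = {\<omega>. \<exists>\<alpha>::'a \<Rightarrow> real. linear \<alpha> \<and> (\<forall>u v. \<omega> u v = - \<alpha> (br u v))}"

definition form_scale :: "real \<Rightarrow> ('a \<Rightarrow> 'a \<Rightarrow> real) \<Rightarrow> ('a \<Rightarrow> 'a \<Rightarrow> real)" where
  "form_scale c \<omega> = (\<lambda>u v. c * \<omega> u v)"

text \<open>dim H^2(g) = dim Z2 - dim B2 (B2 is a subspace of Z2).\<close>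

definition dim_H2 :: "('a::euclidean_space \<Rightarrow> 'a \<Rightarrow> 'a) \<Rightarrow> nat" where
  "dim_H2 br = vector_space.dim form_scale (Z2 br) - vector_space.dim form_scale (B2 br)"

text \<open>The classes [theta_0],...,[theta_(k-1)] are linearly independent in H^2 = Z2/B2:
  a linear combination lies in B2 only if all coefficients vanish.\<close>

definition classes_lin_indep ::
  "('a::euclidean_space \<Rightarrow> 'a \<Rightarrow> 'a) \<Rightarrow> nat \<Rightarrow> (nat \<Rightarrow> 'a \<Rightarrow> 'a \<Rightarrow> real) \<Rightarrow> bool" where
  "classes_lin_indep br k \<theta> \<longleftrightarrow>
     (\<forall>c::nat \<Rightarrow> real. (\<lambda>u v. \<Sum>i<k. c i * \<theta> i u v) \<in> B2 br \<longrightarrow> (\<forall>i<k. c i = 0))"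

definition k_symplectic ::
  "('a::euclidean_space \<Rightarrow> 'a \<Rightarrow> 'a) \<Rightarrow> nat \<Rightarrow> nat \<Rightarrow> 'a set \<Rightarrow> (nat \<Rightarrow> 'a \<Rightarrow> 'a \<Rightarrow> real) \<Rightarrow> bool" where
  "k_symplectic br n k h \<theta> \<longleftrightarrow>
     n \<ge> 1 \<and> k \<ge> 1 \<and> DIM('a) = n * (k + 1) \<and>
     lie_subalgebra br h \<and> dim h = n * k \<and>
     (\<forall>i<k. skew_form (\<theta> i)) \<and>
     (\<forall>u. (\<forall>i<k. \<forall>v. \<theta> i u v = 0) \<longrightarrow> u = 0) \<and>
     (\<forall>i<k. cocycle2 br (\<theta> i)) \<and>
     (\<forall>i<k. \<forall>u\<in>h. \<forall>v\<in>h. \<theta> i u v = 0)"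

definition nondegenerate_on :: "('a::euclidean_space \<Rightarrow> 'a \<Rightarrow> real) \<Rightarrow> 'a set \<Rightarrow> bool" where
  "nondegenerate_on B h \<longleftrightarrow> (\<forall>u\<in>h. (\<forall>v\<in>h. B u v = 0) \<longrightarrow> u = 0)"

end

theory Submission
  imports Defs
begin


lemma lin_repr:
  fixes g :: "'a::euclidean_space \<Rightarrow> real"
  assumes "linear g"
  shows "g v = (\<Sum>b\<in>Basis. g b *\<^sub>R b) \<bullet> v"
proof -
  have "g v = g (\<Sum>b\<in>Basis. (v \<bullet> b) *\<^sub>R b)" by (simp add: euclidean_representation)
  also have "\<dots> = (\<Sum>b\<in>Basis. (v \<bullet> b) * g b)"
    using assms by (simp add: linear_sum linear_scale o_def)
  also have "\<dots> = (\<Sum>b\<in>Basis. g b * (b \<bullet> v))"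
    by (rule sum.cong) (auto simp: inner_commute[of v])
  also have "\<dots> = (\<Sum>b\<in>Basis. g b *\<^sub>R b) \<bullet> v"
    by (simp add: inner_sum_left)
  finally show ?thesis .
qed

lemma key:
  fixes \<theta> :: "nat \<Rightarrow> 'a::euclidean_space \<Rightarrow> 'a \<Rightarrow> real"
  assumes bil: "\<forall>i<k. bilinear (\<theta> i)"
    and sub: "subspace h" and dimh: "dim h = n*k" and DIMa: "DIM('a) = n*(k+1)"
    and ker: "\<forall>u. (\<forall>i<k. \<forall>v. \<theta> i u v = 0) \<longrightarrow> u = 0"
    and van: "\<forall>i<k. \<forall>u\<in>h. \<forall>v\<in>h. \<theta> i u v = 0"
    and x: "x \<notin> h" and i0: "i0 < k" and c0: "c i0 \<noteq> 0"
    and cz: "\<forall>i. i0 < i \<and> i < k \<longrightarrow> c i = 0"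
  shows "\<exists>u\<in>h. (\<Sum>i<k. c i * \<theta> i u x) \<noteq> 0"
proof -
  define L where "L i u = (\<Sum>b\<in>Basis. \<theta> i u b *\<^sub>R b)" for i u
  have th: "\<theta> i u v = L i u \<bullet> v" if "i < k" for i u v
    unfolding L_def using bil that by (intro lin_repr) (auto simp: bilinear_def)
  have linL: "linear (L i)" if "i < k" for i
  proof -
    have b: "bilinear (\<theta> i)" using bil that by auto
    show ?thesis unfolding L_def
      by (rule linearI) (simp_all add: bilinear_ladd[OF b] bilinear_lmul[OF b] scaleR_add_left
          sum.distrib scaleR_sum_right)
  qed
  define K where "K j = {u\<in>h. \<forall>i<j. L i u = 0}" for j
  define hp where "hp = {y. \<forall>x\<in>h. orthogonal x y}"
  have subK: "subspace (K j)" if "j \<le> k" for j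
    unfolding subspace_def K_def using that sub linL
    by (auto simp: subspace_add subspace_0 subspace_mul linear_add linear_scale linear_0)
  have Kh: "K j \<subseteq> h" for j unfolding K_def by auto
  have KSuc: "K (Suc j) = {u \<in> K j. L j u = 0}" for j
    unfolding K_def by (auto simp: less_Suc_eq)
  have K0: "K 0 = h" unfolding K_def by auto
  have Kk: "K k \<subseteq> {0}"
  proof
    fix u assume "u \<in> K k"
    then have "\<forall>i<k. \<forall>v. \<theta> i u v = 0" using th unfolding K_def by auto
    then show "u \<in> {0}" using ker by auto
  qed
  have dimhp: "dim hp = n"
  proof -
    have "dim {y\<in>UNIV. \<forall>x\<in>h. orthogonal x y} + dim h = dim (UNIV::'a set)"
      by (rule dim_subspace_orthogonal_to_vectors) (auto simp: sub)
    then show ?thesis unfolding hp_def using dimh DIMa by simp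
  qed
  have Lhp: "L i u \<in> hp" if "i < k" "u \<in> h" for i u
    unfolding hp_def orthogonal_def using that van th by (auto simp: inner_commute)
  define C where "C j = {y \<in> K j. \<forall>x\<in>K (Suc j). orthogonal x y}" for j
  have dec: "dim (C j) + dim (K (Suc j)) = dim (K j)" if "j < k" for j
    unfolding C_def
    by (rule dim_subspace_orthogonal_to_vectors) (use that subK[of j] subK[of "Suc j"] in \<open>auto simp: KSuc\<close>)
  have subC: "subspace (C j)" if "j < k" for j
    using subK[of j] that unfolding subspace_def C_def
    by (auto simp: orthogonal_clauses)
  have injC: "inj_on (L j) (span (C j))" if "j < k" for j
  proof -
    have "span (C j) = C j" using subC that by (simp add: span_eq_iff)
    moreover have "inj_on (L j) (C j)"
    proof (rule inj_onI)
      fix a b assume a: "a \<in> C j" and b: "b \<in> C j" and e: "L j a = L j b"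
      have d: "a - b \<in> C j" using subC[OF that] a b by (simp add: subspace_diff)
      have "L j (a - b) = 0" using e linL[OF that] by (simp add: linear_diff)
      then have "a - b \<in> K (Suc j)" using d KSuc unfolding C_def by auto
      then have "orthogonal (a - b) (a - b)" using d unfolding C_def by auto
      then show "a = b" by (simp add: orthogonal_def)
    qed
    ultimately show ?thesis by metis
  qed
  have eC: "dim (C j) \<le> n" if "j < k" for j
  proof -
    have "dim (C j) = dim (L j ` C j)" using dim_image_eq[OF linL[OF that] injC[OF that]] by simp
    also have "\<dots> \<le> dim hp" using Lhp that Kh unfolding C_def by (intro dim_subset) auto
    finally show ?thesis using dimhp by simp
  qed
  have chain: "dim (K 0) = dim (K j) + (\<Sum>i<j. dim (C i))" if "j \<le> k" for j
    using that
  proof (induction j)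
    case 0 then show ?case by simp
  next
    case (Suc j)
    then show ?case using dec[of j] by simp
  qed
  have sumC: "(\<Sum>i<k. dim (C i)) = n * k"
    using chain[of k] K0 dimh Kk by simp
  have Ci0: "dim (C i0) = n"
  proof (rule ccontr)
    assume "dim (C i0) \<noteq> n"
    then have "dim (C i0) < n" using eC i0 by fastforce
    then have "(\<Sum>i<k. dim (C i)) < (\<Sum>i<k. n)"
      using eC i0 by (intro sum_strict_mono_ex1) auto
    then show False using sumC by simp
  qed
  have subhp: "subspace hp" unfolding hp_def subspace_def by (auto simp: orthogonal_clauses)
  have img: "L i0 ` C i0 = hp"
  proof (rule subspace_dim_equal)
    show "subspace (L i0 ` C i0)" using subC[OF i0] linL[OF i0] by (simp add: linear_subspace_image)
    show "subspace hp" by fact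
    show "L i0 ` C i0 \<subseteq> hp" using Lhp i0 Kh unfolding C_def by auto
    show "dim hp \<le> dim (L i0 ` C i0)"
      using dim_image_eq[OF linL[OF i0] injC[OF i0]] Ci0 dimhp by simp
  qed
  obtain y z where y: "y \<in> span h" and z: "\<And>w. w \<in> span h \<Longrightarrow> orthogonal z w" and xyz: "x = y + z"
    using orthogonal_subspace_decomp_exists[of h x] by blast
  have sh: "span h = h" using sub by (simp add: span_eq_iff)
  have zhp: "z \<in> hp" using z sh unfolding hp_def by (auto simp: orthogonal_commute)
  have "z \<noteq> 0" using x y xyz sh by auto
  have zx: "z \<bullet> x \<noteq> 0"
  proof -
    have "z \<bullet> y = 0" using z y by (simp add: orthogonal_def)
    then have "z \<bullet> x = z \<bullet> z" using xyz by (simp add: inner_add_right)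
    then show ?thesis using \<open>z \<noteq> 0\<close> by simp
  qed
  obtain u where uC: "u \<in> C i0" and Lu: "L i0 u = z" using img zhp by force
  have uK: "u \<in> K i0" using uC unfolding C_def by auto
  have uh: "u \<in> h" using uK Kh by auto
  have zero: "c i * \<theta> i u x = 0" if "i \<in> {..<k} - {i0}" for i
  proof (cases "i < i0")
    case True
    then have "L i u = 0" using uK unfolding K_def by auto
    then show ?thesis using th[of i] that by simp
  next
    case False
    then show ?thesis using cz that by auto
  qed
  have "(\<Sum>i<k. c i * \<theta> i u x) = c i0 * \<theta> i0 u x + (\<Sum>i\<in>{..<k} - {i0}. c i * \<theta> i u x)"
    using i0 by (simp add: sum.remove)
  also have "(\<Sum>i\<in>{..<k} - {i0}. c i * \<theta> i u x) = 0"
    by (rule sum.neutral) (use zero in blast)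
  also have "c i0 * \<theta> i0 u x = c i0 * (z \<bullet> x)" using th[OF i0] Lu by simp
  finally have "(\<Sum>i<k. c i * \<theta> i u x) \<noteq> 0" using c0 zx by simp
  then show ?thesis using uh by blast
qed



lemma riesz:
  fixes B :: "'a::euclidean_space \<Rightarrow> 'a \<Rightarrow> real"
  assumes b: "bilinear B" and nd: "\<forall>u. (\<forall>v. B u v = 0) \<longrightarrow> u = 0" and la: "linear \<alpha>"
  shows "\<exists>a. \<forall>x. \<alpha> x = B a x"
proof -
  define R where "R a = (\<Sum>b\<in>Basis. B a b *\<^sub>R b)" for a
  have BR: "B a v = R a \<bullet> v" for a v
    unfolding R_def using b by (intro lin_repr) (auto simp: bilinear_def)
  have linR: "linear R" unfolding R_def
    by (rule linearI) (simp_all add: bilinear_ladd[OF b] bilinear_lmul[OF b] scaleR_add_left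
          sum.distrib scaleR_sum_right)
  have "inj R"
  proof (rule injI)
    fix x y assume "R x = R y"
    then have "R (x - y) = 0" using linR by (simp add: linear_diff)
    then have "\<forall>v. B (x - y) v = 0" using BR by simp
    then show "x = y" using nd by force
  qed
  then have "surj R" using linear_injective_imp_surjective[OF linR \<open>inj R\<close>] by simp
  then obtain a where "R a = (\<Sum>b\<in>Basis. \<alpha> b *\<^sub>R b)" by (metis surjD)
  then have "\<forall>x. \<alpha> x = B a x" using lin_repr[OF la] BR by metis
  then show ?thesis by blast
qed

lemma anti:
  assumes "lie_algebra br" shows "br u v = - br v u"
proof -
  have b: "bilinear br" and z: "\<And>x. br x x = 0" using assms unfolding lie_algebra_def by auto
  have "0 = br (u + v) (u + v)" using z by simp
  also have "\<dots> = br u u + br u v + (br v u + br v v)"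
    by (simp add: bilinear_ladd[OF b] bilinear_radd[OF b])
  finally have "br u v + br v u = 0" using z by simp
  then show ?thesis by (simp add: eq_neg_iff_add_eq_0)
qed

lemma partA:
  fixes br :: "'a::euclidean_space \<Rightarrow> 'a \<Rightarrow> 'a"
    and B :: "'a \<Rightarrow> 'a \<Rightarrow> real"
    and n k :: nat
    and h :: "'a set"
    and \<theta> :: "nat \<Rightarrow> 'a \<Rightarrow> 'a \<Rightarrow> real"
  assumes q: "quadratic_lie_algebra br B"
    and ks: "k_symplectic br n k h \<theta>"
    and nd: "nondegenerate_on B h"
  shows "classes_lin_indep br k \<theta>"
  unfolding classes_lin_indep_def
proof (rule allI, rule impI)
  fix c :: "nat \<Rightarrow> real"
  assume "(\<lambda>u v. \<Sum>i<k. c i * \<theta> i u v) \<in> B2 br"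
  then obtain \<alpha> :: "'a \<Rightarrow> real" where la: "linear \<alpha>"
    and om: "\<And>u v. (\<Sum>i<k. c i * \<theta> i u v) = - \<alpha> (br u v)"
    unfolding B2_def by auto
  have bB: "bilinear B" and symB: "\<And>u v. B u v = B v u" and ndB: "\<forall>u. (\<forall>v. B u v = 0) \<longrightarrow> u = 0"
    and inv: "\<And>u v w. B (br u v) w + B (br u w) v = 0"
    using q unfolding quadratic_lie_algebra_def quadratic_form_def by auto
  obtain a where aB: "\<And>x. \<alpha> x = B a x" using riesz[OF bB ndB la] by blast
  have om2: "(\<Sum>i<k. c i * \<theta> i u v) = - B (br u v) a" for u v using om[of u v] aB[of "br u v"] symB[of a "br u v"] by simp
  have n1: "n \<ge> 1" and DIMa: "DIM('a) = n*(k+1)" and lsub: "lie_subalgebra br h"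
    and dimh: "dim h = n*k" and sk: "\<forall>i<k. skew_form (\<theta> i)"
    and ker: "\<forall>u. (\<forall>i<k. \<forall>v. \<theta> i u v = 0) \<longrightarrow> u = 0"
    and van: "\<forall>i<k. \<forall>u\<in>h. \<forall>v\<in>h. \<theta> i u v = 0"
    using ks unfolding k_symplectic_def by auto
  have bil: "\<forall>i<k. bilinear (\<theta> i)" using sk unfolding skew_form_def by auto
  have sub: "subspace h" and clos: "\<And>u v. u \<in> h \<Longrightarrow> v \<in> h \<Longrightarrow> br u v \<in> h"
    using lsub unfolding lie_subalgebra_def by auto
  show "\<forall>i<k. c i = 0"
  proof (rule ccontr)
    assume "\<not> (\<forall>i<k. c i = 0)"
    define S where "S = {i. i < k \<and> c i \<noteq> 0}"
    have fS: "finite S" and neS: "S \<noteq> {}" using \<open>\<not> (\<forall>i<k. c i = 0)\<close> unfolding S_def by auto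
    define i0 where "i0 = Max S"
    have i0S: "i0 \<in> S" using fS neS unfolding i0_def by simp
    have i0k: "i0 < k" and c0: "c i0 \<noteq> 0" using i0S unfolding S_def by auto
    have cz: "\<forall>i. i0 < i \<and> i < k \<longrightarrow> c i = 0"
    proof (intro allI impI)
      fix i assume i: "i0 < i \<and> i < k"
      show "c i = 0"
      proof (rule ccontr)
        assume "c i \<noteq> 0"
        then have "i \<in> S" using i unfolding S_def by simp
        then have "i \<le> i0" using Max_ge[OF fS] unfolding i0_def by simp
        then show False using i by simp
      qed
    qed
    have KL: "\<exists>u\<in>h. (\<Sum>i<k. c i * \<theta> i u x) \<noteq> 0" if "x \<notin> h" for x
      by (rule key[OF bil sub dimh DIMa ker van that i0k c0 cz])
    show False
    proof (cases "a \<in> h")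
      case False
      then obtain u where "u \<in> h" "(\<Sum>i<k. c i * \<theta> i u a) \<noteq> 0" using KL by blast
      moreover have "B (br u a) a = 0" using inv[of u a a] by simp
      ultimately show False using om2 by simp
    next
      case True
      have "h \<noteq> UNIV"
      proof
        assume "h = UNIV"
        then have "dim h = DIM('a)" by simp
        then show False using dimh DIMa n1 by simp
      qed
      then obtain x where x: "x \<notin> h" by blast
      then obtain u where uh: "u \<in> h" and ne: "(\<Sum>i<k. c i * \<theta> i u x) \<noteq> 0" using KL by blast
      have "br u a \<in> h" using clos uh True by simp
      moreover have "\<forall>v\<in>h. B (br u a) v = 0"
      proof
        fix v assume vh: "v \<in> h"
        have "B (br u a) v = - B (br u v) a" using inv[of u v a] by simp
        also have "\<dots> = (\<Sum>i<k. c i * \<theta> i u v)" using om2 by simp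
        also have "\<dots> = 0" using van uh vh by (auto intro!: sum.neutral)
        finally show "B (br u a) v = 0" .
      qed
      ultimately have "br u a = 0" using nd unfolding nondegenerate_on_def by blast
      then have "B (br u x) a = 0" using inv[of u x a] bilinear_lzero[OF bB] by simp
      then show False using ne om2 by simp
    qed
  qed
qed


lemma sum_app: "(\<Sum>i\<in>A. f i) x = (\<Sum>i\<in>A. f i x)"
  for f :: "'i \<Rightarrow> 'x \<Rightarrow> 'b::comm_monoid_add"
  by (induction A rule: infinite_finite_induct) auto

interpretation FS: vector_space "form_scale :: real \<Rightarrow> ('a \<Rightarrow> 'a \<Rightarrow> real) \<Rightarrow> _"
  by unfold_locales (auto simp: form_scale_def fun_eq_iff algebra_simps)

lemma lin_sum_basis:
  fixes g :: "'a::euclidean_space \<Rightarrow> real"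
  assumes "linear g"
  shows "g w = (\<Sum>b\<in>Basis. g b * (b \<bullet> w))"
  using lin_repr[OF assms, of w] by (simp add: inner_sum_left)

lemma partC:
  fixes br :: "'a::euclidean_space \<Rightarrow> 'a \<Rightarrow> 'a"
    and B :: "'a \<Rightarrow> 'a \<Rightarrow> real"
    and n k :: nat
    and h :: "'a set"
    and \<theta> :: "nat \<Rightarrow> 'a \<Rightarrow> 'a \<Rightarrow> real"
  assumes q: "quadratic_lie_algebra br B"
    and ks: "k_symplectic br n k h \<theta>"
    and li: "classes_lin_indep br k \<theta>"
  shows "k \<le> dim_H2 br"
proof -
  have la: "lie_algebra br" using q unfolding quadratic_lie_algebra_def by auto
  have bbr: "bilinear br" and jac: "\<And>x y z. br x (br y z) + br y (br z x) + br z (br x y) = 0"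
    using la unfolding lie_algebra_def by auto
  have an: "\<And>u v. br u v = - br v u" using anti[OF la] .
  have thZ: "\<theta> i \<in> Z2 br" if "i < k" for i
    using ks that unfolding k_symplectic_def Z2_def by auto
  have lin: "\<And>c. (\<lambda>u v. \<Sum>i<k. c i * \<theta> i u v) \<in> B2 br \<Longrightarrow> \<forall>i<k. c i = 0"
    using li unfolding classes_lin_indep_def by blast
  define G where "G = (\<lambda>b::'a. \<lambda>u v. b \<bullet> br u v) ` Basis"
  have B2G: "B2 br \<subseteq> FS.span G"
  proof
    fix \<omega> assume "\<omega> \<in> B2 br"
    then obtain \<alpha> :: "'a \<Rightarrow> real" where la: "linear \<alpha>" and om: "\<And>u v. \<omega> u v = - \<alpha> (br u v)"
      unfolding B2_def by auto
    have "\<omega> = (\<Sum>b\<in>Basis. form_scale (- \<alpha> b) (\<lambda>u v. b \<bullet> br u v))"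
    proof (intro ext)
      fix u v
      have "\<omega> u v = - (\<Sum>b\<in>Basis. \<alpha> b * (b \<bullet> br u v))"
        using om lin_sum_basis[OF la, of "br u v"] by simp
      also have "\<dots> = (\<Sum>b\<in>Basis. form_scale (- \<alpha> b) (\<lambda>u v. b \<bullet> br u v)) u v"
        by (simp add: sum_app form_scale_def sum_negf)
      finally show "\<omega> u v = (\<Sum>b\<in>Basis. form_scale (- \<alpha> b) (\<lambda>u v. b \<bullet> br u v)) u v" .
    qed
    also have "\<dots> \<in> FS.span G"
      unfolding G_def by (intro FS.span_sum FS.span_scale FS.span_base) auto
    finally show "\<omega> \<in> FS.span G" .
  qed
  define G2 where "G2 = (\<lambda>p::'a \<times> 'a. \<lambda>u v. (fst p \<bullet> u) * (snd p \<bullet> v)) ` (Basis \<times> Basis)"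
  have Z2G2: "Z2 br \<subseteq> FS.span G2"
  proof
    fix \<omega> assume "\<omega> \<in> Z2 br"
    then have b: "bilinear \<omega>" unfolding Z2_def cocycle2_def skew_form_def by auto
    have "\<omega> = (\<Sum>p\<in>Basis \<times> Basis. form_scale (\<omega> (fst p) (snd p)) (\<lambda>u v. (fst p \<bullet> u) * (snd p \<bullet> v)))"
    proof (intro ext)
      fix u v
      have l1: "linear (\<omega> u)" for u using b unfolding bilinear_def by auto
      have l2: "linear (\<lambda>u. \<omega> u b2)" for b2 using b unfolding bilinear_def by auto
      have "\<omega> u v = (\<Sum>b2\<in>Basis. \<omega> u b2 * (b2 \<bullet> v))" by (rule lin_sum_basis[OF l1])
      also have "\<dots> = (\<Sum>b2\<in>Basis. (\<Sum>b1\<in>Basis. \<omega> b1 b2 * (b1 \<bullet> u)) * (b2 \<bullet> v))"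
        using lin_sum_basis[OF l2] by metis
      also have "\<dots> = (\<Sum>b1\<in>Basis. \<Sum>b2\<in>Basis. \<omega> b1 b2 * ((b1 \<bullet> u) * (b2 \<bullet> v)))"
        by (subst sum.swap) (simp add: sum_distrib_right mult.assoc)
      also have "\<dots> = (\<Sum>p\<in>Basis \<times> Basis. \<omega> (fst p) (snd p) * ((fst p \<bullet> u) * (snd p \<bullet> v)))"
        by (simp add: sum.cartesian_product case_prod_beta)
      also have "\<dots> = (\<Sum>p\<in>Basis \<times> Basis. form_scale (\<omega> (fst p) (snd p)) (\<lambda>u v. (fst p \<bullet> u) * (snd p \<bullet> v))) u v"
        by (simp add: sum_app form_scale_def)
      finally show "\<omega> u v = (\<Sum>p\<in>Basis \<times> Basis. form_scale (\<omega> (fst p) (snd p)) (\<lambda>u v. (fst p \<bullet> u) * (snd p \<bullet> v))) u v" .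
    qed
    also have "\<dots> \<in> FS.span G2"
      unfolding G2_def by (intro FS.span_sum FS.span_scale FS.span_base) auto
    finally show "\<omega> \<in> FS.span G2" .
  qed
  have subB2: "FS.subspace (B2 br)"
    unfolding FS.subspace_def
  proof (intro conjI ballI allI)
    show "0 \<in> B2 br" unfolding B2_def
      by (auto intro!: exI[of _ "\<lambda>x. 0"] simp: linear_zero)
  next
    fix x y assume "x \<in> B2 br" "y \<in> B2 br"
    then obtain a1 a2 :: "'a \<Rightarrow> real" where "linear a1" "\<forall>u v. x u v = - a1 (br u v)"
      "linear a2" "\<forall>u v. y u v = - a2 (br u v)" unfolding B2_def by auto
    then show "x + y \<in> B2 br" unfolding B2_def
      by (auto intro!: exI[of _ "\<lambda>w. a1 w + a2 w"] linear_compose_add)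
  next
    fix c :: real and x assume "x \<in> B2 br"
    then obtain a1 :: "'a \<Rightarrow> real" where "linear a1" "\<forall>u v. x u v = - a1 (br u v)"
      unfolding B2_def by auto
    moreover have "linear (\<lambda>w. c * a1 w)"
      by (rule linearI) (simp_all add: linear_add[OF \<open>linear a1\<close>] linear_scale[OF \<open>linear a1\<close>] algebra_simps)
    ultimately show "form_scale c x \<in> B2 br" unfolding B2_def form_scale_def
      by (auto intro!: exI[of _ "\<lambda>w. c * a1 w"])
  qed
  have B2Z2: "B2 br \<subseteq> Z2 br"
  proof
    fix \<omega> assume "\<omega> \<in> B2 br"
    then obtain \<alpha> :: "'a \<Rightarrow> real" where la: "linear \<alpha>" and om: "\<And>u v. \<omega> u v = - \<alpha> (br u v)"
      unfolding B2_def by auto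
    have omf: "\<omega> = (\<lambda>u v. - \<alpha> (br u v))" using om by (intro ext) simp
    have bil: "bilinear \<omega>" unfolding omf bilinear_def
    proof (intro conjI allI)
      fix x
      show "linear (\<lambda>v. - \<alpha> (br x v))"
        by (rule linearI) (simp_all add: bilinear_radd[OF bbr] bilinear_rmul[OF bbr]
            linear_add[OF la] linear_scale[OF la])
      show "linear (\<lambda>u. - \<alpha> (br u x))"
        by (rule linearI) (simp_all add: bilinear_ladd[OF bbr] bilinear_lmul[OF bbr]
            linear_add[OF la] linear_scale[OF la])
    qed
    have sk: "\<omega> u v = - \<omega> v u" for u v
      using an[of u v] unfolding omf by (simp add: linear_neg[OF la])
    have cc: "\<omega> (br u v) w + \<omega> (br v w) u + \<omega> (br w u) v = 0" for u v w
    proof -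
      have "\<omega> (br u v) w + \<omega> (br v w) u + \<omega> (br w u) v
          = - \<alpha> (br (br u v) w + br (br v w) u + br (br w u) v)"
        unfolding omf by (simp add: linear_add[OF la])
      also have "br (br u v) w + br (br v w) u + br (br w u) v
          = - (br u (br v w) + br v (br w u) + br w (br u v))"
        using an[of "br u v" w] an[of "br v w" u] an[of "br w u" v] by simp
      also have "\<dots> = 0" using jac by simp
      finally show ?thesis using linear_0[OF la] by simp
    qed
    have "cocycle2 br \<omega>" unfolding cocycle2_def skew_form_def
      using bil sk cc by blast
    then show "\<omega> \<in> Z2 br" by (simp add: Z2_def)
  qed
  obtain Bb where Bb: "Bb \<subseteq> B2 br" "FS.independent Bb" "B2 br \<subseteq> FS.span Bb"
    "card Bb = FS.dim (B2 br)" by (rule FS.basis_exists[of "B2 br"])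
  have fG: "finite G" unfolding G_def by simp
  have fBb: "finite Bb" using FS.independent_span_bound[OF fG Bb(2)] Bb(1) B2G by blast
  obtain BZ where BZ: "BZ \<subseteq> Z2 br" "FS.independent BZ" "Z2 br \<subseteq> FS.span BZ"
    "card BZ = FS.dim (Z2 br)" by (rule FS.basis_exists[of "Z2 br"])
  have fG2: "finite G2" unfolding G2_def by simp
  have fBZ: "finite BZ" using FS.independent_span_bound[OF fG2 BZ(2)] BZ(1) Z2G2 by blast
  define \<Theta> where "\<Theta> = \<theta> ` {..<k}"
  have zB2: "(0::'a \<Rightarrow> 'a \<Rightarrow> real) \<in> B2 br" using FS.subspace_0[OF subB2] .
  have injT: "inj_on \<theta> {..<k}"
  proof (rule inj_onI, rule ccontr)
    fix i j assume i: "i \<in> {..<k}" and j: "j \<in> {..<k}" and e: "\<theta> i = \<theta> j" and ne: "i \<noteq> j"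
    define c where "c l = (if l = i then 1 else if l = j then -1 else (0::real))" for l
    have "(\<lambda>u v. \<Sum>l<k. c l * \<theta> l u v) = 0"
    proof (intro ext)
      fix u v
      have "(\<Sum>l<k. c l * \<theta> l u v) = (\<Sum>l<k. (if l = i then \<theta> i u v else 0) + (if l = j then - \<theta> j u v else 0))"
        by (rule sum.cong) (auto simp: c_def ne)
      also have "\<dots> = 0" using i j e by (simp add: sum.distrib)
      finally show "(\<Sum>l<k. c l * \<theta> l u v) = 0 u v" by simp
    qed
    then have "\<forall>l<k. c l = 0" using lin zB2 by simp
    then show False using i unfolding c_def by auto
  qed
  have disj: "Bb \<inter> \<Theta> = {}"
  proof (rule ccontr)
    assume "Bb \<inter> \<Theta> \<noteq> {}"
    then obtain i where i: "i < k" and "\<theta> i \<in> Bb" unfolding \<Theta>_def by auto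
    then have tB: "\<theta> i \<in> B2 br" using Bb(1) by auto
    define c where "c l = (if l = i then 1 else (0::real))" for l
    have "(\<lambda>u v. \<Sum>l<k. c l * \<theta> l u v) = \<theta> i"
    proof (intro ext)
      fix u v
      have "(\<Sum>l<k. c l * \<theta> l u v) = (\<Sum>l<k. (if l = i then \<theta> i u v else 0))"
        by (rule sum.cong) (auto simp: c_def)
      also have "\<dots> = \<theta> i u v" using i by simp
      finally show "(\<Sum>l<k. c l * \<theta> l u v) = \<theta> i u v" .
    qed
    then have "\<forall>l<k. c l = 0" using lin tB by simp
    then show False using i unfolding c_def by auto
  qed
  define T where "T = Bb \<union> \<Theta>"
  have fT: "finite T" unfolding T_def \<Theta>_def using fBb by simp
  have TZ: "T \<subseteq> Z2 br" unfolding T_def \<Theta>_def using Bb(1) B2Z2 thZ by auto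
  have spB: "FS.span Bb \<subseteq> B2 br" using FS.span_minimal[OF Bb(1) subB2] .
  have indT: "FS.independent T"
  proof (rule FS.independent_if_scalars_zero[OF fT])
    fix f x assume s: "(\<Sum>y\<in>T. form_scale (f y) y) = 0" and x: "x \<in> T"
    define P where "P = (\<Sum>y\<in>Bb. form_scale (f y) y)"
    define Q where "Q = (\<Sum>y\<in>\<Theta>. form_scale (f y) y)"
    have fTh: "finite \<Theta>" unfolding \<Theta>_def by simp
    have "(\<Sum>y\<in>T. form_scale (f y) y) = P + Q" unfolding T_def P_def Q_def
      by (rule sum.union_disjoint[OF fBb fTh disj])
    then have PQ: "P + Q = 0" using s by simp
    have PB: "P \<in> B2 br" unfolding P_def
      by (rule subsetD[OF spB]) (intro FS.span_sum FS.span_scale FS.span_base)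
    have Qeq: "Q = (\<lambda>u v. \<Sum>i<k. f (\<theta> i) * \<theta> i u v)"
      unfolding Q_def \<Theta>_def
      by (auto simp: sum.reindex[OF injT] sum_app form_scale_def fun_eq_iff)
    have "Q = - P" using PQ by (simp add: eq_neg_iff_add_eq_0 add.commute)
    then have "Q \<in> B2 br" using FS.subspace_neg[OF subB2 PB] by simp
    then have fz: "\<forall>i<k. f (\<theta> i) = 0" using lin Qeq by simp
    show "f x = 0"
    proof (cases "x \<in> \<Theta>")
      case True then show ?thesis using fz unfolding \<Theta>_def by auto
    next
      case False
      then have xB: "x \<in> Bb" using x unfolding T_def by auto
      have "Q = 0" unfolding Qeq using fz by (auto simp: fun_eq_iff)
      then have P0: "P = 0" using PQ by simp
      show ?thesis
      proof (rule ccontr)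
        assume "f x \<noteq> 0"
        then have "FS.dependent Bb" using FS.dependent_finite[OF fBb] P0 xB unfolding P_def by blast
        then show False using Bb(2) by simp
      qed
    qed
  qed
  have cardT: "card T = card Bb + k"
    unfolding T_def using card_Un_disjoint[OF fBb _ disj] card_image[OF injT] fBb
    unfolding \<Theta>_def by simp
  have "card T \<le> card BZ"
    using FS.independent_span_bound[OF fBZ indT] TZ BZ(3) by blast
  then show ?thesis unfolding dim_H2_def using cardT Bb(4) BZ(4) by simp
qed


theorem mainTheorem4:
  fixes br :: "'a::euclidean_space \<Rightarrow> 'a \<Rightarrow> 'a"
    and B :: "'a \<Rightarrow> 'a \<Rightarrow> real"
    and n k :: nat
    and h :: "'a set"
    and \<theta> :: "nat \<Rightarrow> 'a \<Rightarrow> 'a \<Rightarrow> real"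
  assumes "quadratic_lie_algebra br B"
    and "k_symplectic br n k h \<theta>"
    and "nondegenerate_on B h"
  shows "classes_lin_indep br k \<theta> \<and> k \<le> dim_H2 br"
proof -
  have li: "classes_lin_indep br k \<theta>" using partA[OF assms] .
  then show ?thesis using partC[OF assms(1,2) li] by simp
qed

end
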